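(* Let $n\ge1$, let $\vec x=x_1,\dots,x_n$ be variables, and let $\sigma$ be a symmetry of the pseudo-Boolean formula $\mathcal{C}$ with support $\{x_{i_1},\dots,x_{i_k}\}$, $i_1<\dots<i_k$. Let $\mathcal{D}$ be a formula containing the circuit constraints for $\sigma$ defined below, and let $C\doteq t_k\ge1$. Then the proof goal $\mathcal{C}\cup\mathcal{D}\cup\{\neg C\}\cup\mathcal{S}(\vec x{\upharpoonright}_\sigma,\vec x,\vec a,\vec d)\vdash\{d_n\ge1\}$ can be shown, i.e., a contradiction $0\ge1$ can be derived from $\mathcal{C}\cup\mathcal{D}\cup\{\bar t_k\ge1\}\cup\mathcal{S}(\vec x{\upharpoonright}_\sigma,\vec x,\vec a,\vec d)\cup\{\bar d_n\ge1\}$, using $O(k)$ RUP steps and cutting planes steps, where the RUP steps require $O(n)$ propagations in total.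
   Context: Literals are $x$ or $\bar x=1-x$; PB constraints $\sum_i c_i\ell_i\ge A$; $\neg(\sum c_i\ell_i\ge A)\doteq\sum c_i\bar\ell_i\ge\sum c_i-A+1$. A symmetry $\sigma$ is a permutation of literals with $\sigma(\bar\ell)=\overline{\sigma(\ell)}$ and finite support $\{x:\sigma(x)\ne x\}$, such that $\mathcal{C}{\upharpoonright}_\sigma$ equals $\mathcal{C}$ syntactically. Lexicographic-order specification $\mathcal{S}(\vec u,\vec v,\vec a,\vec d)$ over $n$ variables: $\bar a_1+u_1+\bar v_1\ge1$; $2a_1+\bar u_1+v_1\ge2$; for $1\le i\le n-2$: $3\bar a_{i+1}+2a_i+u_{i+1}+\bar v_{i+1}\ge3$, $2a_{i+1}+2\bar a_i+\bar u_{i+1}+v_{i+1}\ge2$; $\bar d_1+v_1+\bar u_1\ge1$; $2d_1+\bar v_1+u_1\ge2$; for $1\le i\le n-1$: $4\bar d_{i+1}+3d_i+\bar a_i+v_{i+1}+\bar u_{i+1}\ge4$, $4d_{i+1}+3\bar d_i+a_i+\bar v_{i+1}+u_{i+1}\ge3$. $\mathcal{S}(\vec x{\upharpoonright}_\sigma,\vec x,\vec a,\vec d)$ substitutes $u_i\mapsto\sigma(x_i)$, $v_i\mapsto x_i$; the auxiliary variables $a_i,d_i$ are fresh. Circuit constraints for $\sigma$ (fresh variables $s_1..s_{k-1}$, $t_1..t_k$, writing $p_j=x_{i_j}$, $q_j=\sigma(x_{i_j})$): $\bar s_1+p_1+\bar q_1\ge1$; $2s_1+\bar p_1+q_1\ge2$;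 for $1\le j\le k-2$: $3\bar s_{j+1}+2s_j+p_{j+1}+\bar q_{j+1}\ge3$, $2s_{j+1}+2\bar s_j+\bar p_{j+1}+q_{j+1}\ge2$; $\bar t_1+q_1+\bar p_1\ge1$; $2t_1+\bar q_1+p_1\ge2$; for $1\le j\le k-1$: $4\bar t_{j+1}+3t_j+\bar s_j+q_{j+1}+\bar p_{j+1}\ge4$, $3t_{j+1}+3\bar t_j+s_j+\bar q_{j+1}+p_{j+1}\ge3$. A cutting planes step derives a new constraint from a bounded number of available constraints and literal axioms using addition, positive multiplication, division with rounding up, saturation and weakening. A RUP step derives $D$ if unit propagation on the available constraints together with $\neg D$ reaches a conflict (unit propagation: a constraint with negative slack $\sum_{i:\rho(\ell_i)\ne0}c_i-A$ under partial assignment $\rho$ is a conflict; an unassigned literal whose coefficient exceeds the slack is set to true). *)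

theory Defs
  imports Main
begin

datatype 'v lit = Pos 'v | Neg 'v

fun neg :: "'v lit \<Rightarrow> 'v lit" where
  "neg (Pos v) = Neg v"
| "neg (Neg v) = Pos v"

text \<open>A PB constraint is stored in normalized linear form: the pair (f, A) stands for
  sum over v of f v * v \<ge> A, with variables ranging over {0,1}.  A term c * (negated v)
  is c - c * v, so every constraint over literals has such a representation.\<close>
type_synonym 'v constr = "('v \<Rightarrow> int) \<times> int"

definition vars :: "'v constr \<Rightarrow> 'v set" where
  "vars c = {v. fst c v \<noteq> 0}"

definition wf_constr :: "'v constr \<Rightarrow> bool" where
  "wf_constr c \<longleftrightarrow> finite (vars c)"

fun lc :: "'v constr \<Rightarrow> 'v lit \<Rightarrow> int" where
  "lc c (Pos v) = max (fst c v) 0"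
| "lc c (Neg v) = max (- fst c v) 0"

definition deg :: "'v constr \<Rightarrow> int" where
  "deg c = snd c + (\<Sum>v\<in>{v. fst c v < 0}. - fst c v)"

text \<open>The constraint sum over literals l of g l * l \<ge> D (g finitely supported, nonnegative).\<close>
definition of_lits :: "('v lit \<Rightarrow> int) \<Rightarrow> int \<Rightarrow> 'v constr" where
  "of_lits g D = (\<lambda>v. g (Pos v) - g (Neg v), D - (\<Sum>v\<in>{v. g (Neg v) \<noteq> 0}. g (Neg v)))"

definition pb :: "(int \<times> 'v lit) list \<Rightarrow> int \<Rightarrow> 'v constr" where
  "pb ts A = of_lits (\<lambda>l. sum_list (map (\<lambda>(c, l'). if l' = l then c else 0) ts)) A"

definition falsum :: "'v constr" where
  "falsum = ((\<lambda>_. 0), 1)"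

text \<open>Negation: not (L \<ge> A) is -L \<ge> 1 - A, i.e. sum c_i (negated l_i) \<ge> sum c_i - A + 1.\<close>
definition negc :: "'v constr \<Rightarrow> 'v constr" where
  "negc c = ((\<lambda>v. - fst c v), 1 - snd c)"

definition lit_axiom :: "'v lit \<Rightarrow> 'v constr" where
  "lit_axiom l = pb [(1, l)] 0"

definition addc :: "'v constr \<Rightarrow> 'v constr \<Rightarrow> 'v constr" where
  "addc c1 c2 = ((\<lambda>v. fst c1 v + fst c2 v), snd c1 + snd c2)"

definition multc :: "int \<Rightarrow> 'v constr \<Rightarrow> 'v constr" where
  "multc k c = ((\<lambda>v. k * fst c v), k * snd c)"

definition ceildiv :: "int \<Rightarrow> int \<Rightarrow> int" where
  "ceildiv a d = - ((- a) div d)"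

definition divc :: "int \<Rightarrow> 'v constr \<Rightarrow> 'v constr" where
  "divc d c = of_lits (\<lambda>l. ceildiv (lc c l) d) (ceildiv (deg c) d)"

definition satc :: "'v constr \<Rightarrow> 'v constr" where
  "satc c = of_lits (\<lambda>l. min (lc c l) (max (deg c) 0)) (deg c)"

definition weakc :: "'v lit \<Rightarrow> 'v constr \<Rightarrow> 'v constr" where
  "weakc l c = of_lits (\<lambda>l'. if l' = l then 0 else lc c l') (deg c - lc c l)"

inductive cp :: "'v constr set \<Rightarrow> 'v constr \<Rightarrow> nat \<Rightarrow> bool" for F where
  cp_avail: "c \<in> F \<Longrightarrow> cp F c 0"
| cp_axiom: "cp F (lit_axiom l) 0"
| cp_add: "cp F c1 m1 \<Longrightarrow> cp F c2 m2 \<Longrightarrow> cp F (addc c1 c2) (Suc (m1 + m2))"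
| cp_mult: "k > 0 \<Longrightarrow> cp F c m \<Longrightarrow> cp F (multc k c) (Suc m)"
| cp_div: "d > 0 \<Longrightarrow> cp F c m \<Longrightarrow> cp F (divc d c) (Suc m)"
| cp_sat: "cp F c m \<Longrightarrow> cp F (satc c) (Suc m)"
| cp_weak: "cp F c m \<Longrightarrow> cp F (weakc l c) (Suc m)"

type_synonym 'v assignment = "'v \<Rightarrow> bool option"

fun lval :: "'v assignment \<Rightarrow> 'v lit \<Rightarrow> bool option" where
  "lval \<rho> (Pos v) = \<rho> v"
| "lval \<rho> (Neg v) = map_option Not (\<rho> v)"

fun assign_true :: "'v assignment \<Rightarrow> 'v lit \<Rightarrow> 'v assignment" where
  "assign_true \<rho> (Pos v) = \<rho>(v := Some True)"
| "assign_true \<rho> (Neg v) = \<rho>(v := Some False)"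

definition slack :: "'v assignment \<Rightarrow> 'v constr \<Rightarrow> int" where
  "slack \<rho> c = (\<Sum>l\<in>{l. lc c l \<noteq> 0 \<and> lval \<rho> l \<noteq> Some False}. lc c l) - deg c"

definition prop_step :: "'v constr set \<Rightarrow> 'v assignment \<Rightarrow> 'v assignment \<Rightarrow> bool" where
  "prop_step F \<rho> \<rho>' \<longleftrightarrow>
     (\<exists>c\<in>F. \<exists>l. lval \<rho> l = None \<and> lc c l > slack \<rho> c \<and> \<rho>' = assign_true \<rho> l)"

definition rup :: "'v constr set \<Rightarrow> 'v constr \<Rightarrow> nat \<Rightarrow> bool" where
  "rup F c p \<longleftrightarrow>
     (\<exists>\<rho>. (prop_step (insert (negc c) F) ^^ p) (\<lambda>_. None) \<rho>
          \<and> (\<exists>c'\<in>insert (negc c) F. slack \<rho> c' < 0))"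

datatype 'v pstep =
    CPStep "'v constr" nat   \<comment> \<open>constraint, number of rule applications\<close>
  | RUPStep "'v constr" nat  \<comment> \<open>constraint, number of propagations\<close>

fun step_constr :: "'v pstep \<Rightarrow> 'v constr" where
  "step_constr (CPStep c _) = c"
| "step_constr (RUPStep c _) = c"

fun step_cost :: "'v pstep \<Rightarrow> nat" where
  "step_cost (CPStep _ m) = Suc m"
| "step_cost (RUPStep _ _) = 1"

fun step_props :: "'v pstep \<Rightarrow> nat" where
  "step_props (CPStep _ _) = 0"
| "step_props (RUPStep _ p) = p"

fun valid_from :: "'v constr set \<Rightarrow> 'v pstep list \<Rightarrow> bool" where
  "valid_from F [] = True"
| "valid_from F (CPStep c m # st) = (cp F c m \<and> valid_from (insert c F) st)"
| "valid_from F (RUPStep c p # st) = (rup F c p \<and> valid_from (insert c F) st)"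

definition refutes :: "'v constr set \<Rightarrow> 'v pstep list \<Rightarrow> bool" where
  "refutes F st \<longleftrightarrow> valid_from F st \<and> falsum \<in> set (map step_constr st)"

definition supp :: "('v lit \<Rightarrow> 'v lit) \<Rightarrow> 'v set" where
  "supp \<sigma> = {v. \<sigma> (Pos v) \<noteq> Pos v}"

text \<open>C restricted by \<sigma>: every literal l is replaced by \<sigma> l.\<close>
definition subst :: "('v lit \<Rightarrow> 'v lit) \<Rightarrow> 'v constr \<Rightarrow> 'v constr" where
  "subst \<sigma> c = of_lits (\<lambda>l. lc c (inv \<sigma> l)) (deg c)"

definition is_symmetry :: "('v lit \<Rightarrow> 'v lit) \<Rightarrow> 'v constr set \<Rightarrow> bool" where
  "is_symmetry \<sigma> C \<longleftrightarrow> bij \<sigma> \<and> (\<forall>l. \<sigma> (neg l) = neg (\<sigma> l)) \<and> finite (supp \<sigma>)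
     \<and> subst \<sigma> ` C = C"

definition lexspec :: "nat \<Rightarrow> (nat \<Rightarrow> 'v lit) \<Rightarrow> (nat \<Rightarrow> 'v lit) \<Rightarrow> (nat \<Rightarrow> 'v) \<Rightarrow> (nat \<Rightarrow> 'v)
    \<Rightarrow> 'v constr set" where
  "lexspec n u v a d =
     {pb [(1, Neg (a 1)), (1, u 1), (1, neg (v 1))] 1,
      pb [(2, Pos (a 1)), (1, neg (u 1)), (1, v 1)] 2}
   \<union> (\<Union>i\<in>{1..n-2}.
       {pb [(3, Neg (a (i+1))), (2, Pos (a i)), (1, u (i+1)), (1, neg (v (i+1)))] 3,
        pb [(2, Pos (a (i+1))), (2, Neg (a i)), (1, neg (u (i+1))), (1, v (i+1))] 2})
   \<union> {pb [(1, Neg (d 1)), (1, v 1), (1, neg (u 1))] 1,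
      pb [(2, Pos (d 1)), (1, neg (v 1)), (1, u 1)] 2}
   \<union> (\<Union>i\<in>{1..n-1}.
       {pb [(4, Neg (d (i+1))), (3, Pos (d i)), (1, Neg (a i)), (1, v (i+1)), (1, neg (u (i+1)))] 4,
        pb [(4, Pos (d (i+1))), (3, Neg (d i)), (1, Pos (a i)), (1, neg (v (i+1))), (1, u (i+1))] 3})"

definition circuit :: "nat \<Rightarrow> (nat \<Rightarrow> 'v lit) \<Rightarrow> (nat \<Rightarrow> 'v lit) \<Rightarrow> (nat \<Rightarrow> 'v) \<Rightarrow> (nat \<Rightarrow> 'v)
    \<Rightarrow> 'v constr set" where
  "circuit k p q s t =
     {pb [(1, Neg (s 1)), (1, p 1), (1, neg (q 1))] 1,
      pb [(2, Pos (s 1)), (1, neg (p 1)), (1, q 1)] 2}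
   \<union> (\<Union>j\<in>{1..k-2}.
       {pb [(3, Neg (s (j+1))), (2, Pos (s j)), (1, p (j+1)), (1, neg (q (j+1)))] 3,
        pb [(2, Pos (s (j+1))), (2, Neg (s j)), (1, neg (p (j+1))), (1, q (j+1))] 2})
   \<union> {pb [(1, Neg (t 1)), (1, q 1), (1, neg (p 1))] 1,
      pb [(2, Pos (t 1)), (1, neg (q 1)), (1, p 1)] 2}
   \<union> (\<Union>j\<in>{1..k-1}.
       {pb [(4, Neg (t (j+1))), (3, Pos (t j)), (1, Neg (s j)), (1, q (j+1)), (1, neg (p (j+1)))] 4,
        pb [(3, Pos (t (j+1))), (3, Neg (t j)), (1, Pos (s j)), (1, neg (q (j+1))), (1, p (j+1))] 3})"

datatype var = X nat | AuxA nat | AuxD nat | AuxS nat | AuxT nat | Other nat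

end

theory Submission
  imports Defs
begin


fun sat :: "('v \<Rightarrow> bool) \<Rightarrow> 'v lit \<Rightarrow> bool" where
  "sat \<tau> (Pos v) = \<tau> v"
| "sat \<tau> (Neg v) = (\<not> \<tau> v)"

lemma sat_neg[simp]: "sat \<tau> (neg l) = (\<not> sat \<tau> l)"
  by (cases l) auto

definition extends :: "('v \<Rightarrow> bool) \<Rightarrow> 'v assignment \<Rightarrow> bool" where
  "extends \<tau> \<rho> \<longleftrightarrow> (\<forall>v b. \<rho> v = Some b \<longrightarrow> \<tau> v = b)"

definition val :: "('v \<Rightarrow> bool) \<Rightarrow> 'v constr \<Rightarrow> int" where
  "val \<tau> c = (\<Sum>v\<in>vars c. fst c v * of_bool (\<tau> v))"

definition satc :: "('v \<Rightarrow> bool) \<Rightarrow> 'v constr \<Rightarrow> bool" where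
  "satc \<tau> c \<longleftrightarrow> snd c \<le> val \<tau> c"

definition tstar :: "'v assignment \<Rightarrow> 'v constr \<Rightarrow> 'v \<Rightarrow> bool" where
  "tstar \<rho> c v = (case \<rho> v of Some b \<Rightarrow> b | None \<Rightarrow> 0 < fst c v)"

lemma extends_tstar: "extends (tstar \<rho> c) \<rho>"
  by (auto simp: extends_def tstar_def)

lemma slack_eq:
  assumes wf: "wf_constr c"
  shows "slack \<rho> c = val (tstar \<rho> c) c - snd c"
proof -
  define V where "V = vars c"
  define f where "f = fst c"
  have fin: "finite V" using wf by (simp add: wf_constr_def V_def)
  define h where "h l = (if lval \<rho> l \<noteq> Some False then lc c l else 0)" for l
  have sub: "{l. lc c l \<noteq> 0 \<and> lval \<rho> l \<noteq> Some False} \<subseteq> Pos ` V \<union> Neg ` V"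
  proof
    fix l assume "l \<in> {l. lc c l \<noteq> 0 \<and> lval \<rho> l \<noteq> Some False}"
    then show "l \<in> Pos ` V \<union> Neg ` V"
      by (cases l) (auto simp: V_def vars_def split: if_splits)
  qed
  have finL: "finite (Pos ` V \<union> Neg ` V)" using fin by simp
  have s1: "(\<Sum>l\<in>{l. lc c l \<noteq> 0 \<and> lval \<rho> l \<noteq> Some False}. lc c l) = (\<Sum>l\<in>Pos ` V \<union> Neg ` V. h l)"
    by (rule sum.mono_neutral_cong_left[OF finL sub]) (auto simp: h_def)
  have s2: "(\<Sum>l\<in>Pos ` V \<union> Neg ` V. h l) = (\<Sum>v\<in>V. h (Pos v)) + (\<Sum>v\<in>V. h (Neg v))"
    by (subst sum.union_disjoint) (auto simp: fin sum.reindex inj_on_def)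
  have d: "deg c = snd c + (\<Sum>v\<in>V. max (- f v) 0)"
  proof -
    have "(\<Sum>v\<in>{v. fst c v < 0}. - fst c v) = (\<Sum>v\<in>V. max (- f v) 0)"
      by (rule sum.mono_neutral_cong_left[OF fin]) (auto simp: V_def vars_def f_def)
    then show ?thesis by (simp add: deg_def)
  qed
  have pv: "h (Pos v) + h (Neg v) - max (- f v) 0 = f v * of_bool (tstar \<rho> c v)" for v
    by (cases "\<rho> v") (auto simp: h_def f_def tstar_def)
  have "slack \<rho> c = (\<Sum>v\<in>V. h (Pos v) + h (Neg v) - max (- f v) 0) - snd c"
    unfolding slack_def s1 s2 d by (simp add: sum.distrib sum_subtractf)
  also have "\<dots> = val (tstar \<rho> c) c - snd c"
    unfolding pv by (simp add: val_def V_def f_def)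
  finally show ?thesis .
qed

lemma K1:
  assumes "wf_constr c" "\<And>\<tau>. extends \<tau> \<rho> \<Longrightarrow> \<not> satc \<tau> c"
  shows "slack \<rho> c < 0"
  using assms(2)[OF extends_tstar[of \<rho> c]] by (simp add: slack_eq[OF assms(1)] satc_def)

lemma val_upd:
  assumes "wf_constr c"
  shows "val (\<tau>(v := b)) c = val \<tau> c + fst c v * (of_bool b - of_bool (\<tau> v))"
proof -
  have fin: "finite (vars c)" using assms by (simp add: wf_constr_def)
  have "val (\<tau>(v := b)) c - val \<tau> c
      = (\<Sum>w\<in>vars c. (if w = v then fst c v * (of_bool b - of_bool (\<tau> v)) else 0))"
    unfolding val_def sum_subtractf[symmetric]
    by (rule sum.cong) (auto simp: algebra_simps)
  also have "\<dots> = fst c v * (of_bool b - of_bool (\<tau> v))"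
    using fin by (simp add: vars_def)
  finally show ?thesis by simp
qed

lemma K2:
  assumes wf: "wf_constr c" and un: "lval \<rho> l = None"
    and h: "\<And>\<tau>. extends \<tau> \<rho> \<Longrightarrow> \<not> sat \<tau> l \<Longrightarrow> \<not> satc \<tau> c"
  shows "slack \<rho> c < lc c l"
proof (cases l)
  case (Pos v)
  let ?t = "(tstar \<rho> c)(v := False)"
  have "extends ?t \<rho>" using un Pos extends_tstar[of \<rho> c] by (auto simp: extends_def)
  then have "\<not> satc ?t c" using h Pos by simp
  moreover have "tstar \<rho> c v = (0 < fst c v)" using un Pos by (simp add: tstar_def)
  ultimately show ?thesis using Pos
    by (auto simp: satc_def val_upd[OF wf] slack_eq[OF wf] max_def)
next
  case (Neg v)
  let ?t = "(tstar \<rho> c)(v := True)"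
  have "extends ?t \<rho>" using un Neg extends_tstar[of \<rho> c] by (auto simp: extends_def)
  then have "\<not> satc ?t c" using h Neg by simp
  moreover have "tstar \<rho> c v = (0 < fst c v)" using un Neg by (simp add: tstar_def)
  ultimately show ?thesis using Neg
    by (auto simp: satc_def val_upd[OF wf] slack_eq[OF wf] max_def)
qed




lemma lval_some: "lval \<rho> l = Some b \<Longrightarrow> extends \<tau> \<rho> \<Longrightarrow> sat \<tau> l = b"
  by (cases l) (auto simp: extends_def)

lemma extends_assign:
  assumes "lval \<rho> l = None" "extends \<tau> (assign_true \<rho> l)"
  shows "extends \<tau> \<rho> \<and> sat \<tau> l"
proof (cases l)
  case (Pos x)
  with assms have h: "\<forall>v b. (\<rho>(x := Some True)) v = Some b \<longrightarrow> \<tau> v = b" by (simp add: extends_def)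
  from h[rule_format, of x True] have "\<tau> x" by simp
  moreover have "extends \<tau> \<rho>" unfolding extends_def
  proof (intro allI impI)
    fix v b assume "\<rho> v = Some b"
    moreover then have "v \<noteq> x" using assms(1) Pos by auto
    ultimately show "\<tau> v = b" using h[rule_format, of v b] by simp
  qed
  ultimately show ?thesis using Pos by simp
next
  case (Neg x)
  with assms have h: "\<forall>v b. (\<rho>(x := Some False)) v = Some b \<longrightarrow> \<tau> v = b" by (simp add: extends_def)
  from h[rule_format, of x False] have "\<not> \<tau> x" by simp
  moreover have "extends \<tau> \<rho>" unfolding extends_def
  proof (intro allI impI)
    fix v b assume "\<rho> v = Some b"
    moreover then have "v \<noteq> x" using assms(1) Neg by auto
    ultimately show "\<tau> v = b" using h[rule_format, of v b] by simp
  qed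
  ultimately show ?thesis using Neg by simp
qed

definition WIN :: "'v constr set \<Rightarrow> 'v assignment \<Rightarrow> nat \<Rightarrow> bool" where
  "WIN G \<rho> B \<longleftrightarrow> (\<exists>\<rho>' q. (prop_step G ^^ q) \<rho> \<rho>' \<and> q \<le> B \<and> (\<exists>c\<in>G. slack \<rho>' c < 0))"

lemma WIN_mono: "WIN G \<rho> B \<Longrightarrow> B \<le> B' \<Longrightarrow> WIN G \<rho> B'"
  unfolding WIN_def by (meson order_trans)

lemma WIN_prop: "prop_step G \<rho> \<rho>1 \<Longrightarrow> WIN G \<rho>1 B \<Longrightarrow> WIN G \<rho> (Suc B)"
  unfolding WIN_def by (meson Suc_le_mono relpowp_Suc_I2)

lemma WIN_conf: "c \<in> G \<Longrightarrow> slack \<rho> c < 0 \<Longrightarrow> WIN G \<rho> B"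
  unfolding WIN_def by (rule exI[of _ \<rho>], rule exI[of _ 0]) auto

definition W :: "'v constr set \<Rightarrow> (('v \<Rightarrow> bool) \<Rightarrow> bool) \<Rightarrow> nat \<Rightarrow> bool" where
  "W G P B \<longleftrightarrow> (\<forall>\<rho>. (\<forall>\<tau>. extends \<tau> \<rho> \<longrightarrow> P \<tau>) \<longrightarrow> WIN G \<rho> B)"

lemma w_conf:
  assumes "c \<in> G \<and> wf_constr c" "\<And>\<tau>. P \<tau> \<Longrightarrow> \<not> satc \<tau> c"
  shows "W G P B"
  unfolding W_def using assms K1 WIN_conf by blast

lemma w_step:
  assumes cG: "c \<in> G \<and> wf_constr c" and side: "\<And>\<tau>. P \<tau> \<Longrightarrow> \<not> sat \<tau> l \<Longrightarrow> \<not> satc \<tau> c"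
    and cont: "W G (\<lambda>\<tau>. P \<tau> \<and> sat \<tau> l) B"
  shows "W G P (Suc B)"
  unfolding W_def
proof (intro allI impI)
  fix \<rho> assume P: "\<forall>\<tau>. extends \<tau> \<rho> \<longrightarrow> P \<tau>"
  show "WIN G \<rho> (Suc B)"
  proof (cases "lval \<rho> l")
    case None
    have "slack \<rho> c < lc c l" using K2[of c \<rho> l] cG None side P by blast
    then have "prop_step G \<rho> (assign_true \<rho> l)" using cG None unfolding prop_step_def by blast
    moreover have "WIN G (assign_true \<rho> l) B"
      using cont extends_assign[OF None] P unfolding W_def by blast
    ultimately show ?thesis by (rule WIN_prop)
  next
    case (Some b)
    show ?thesis
    proof (cases b)
      case True
      have "\<forall>\<tau>. extends \<tau> \<rho> \<longrightarrow> P \<tau> \<and> sat \<tau> l" using P lval_some[OF Some] True by blast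
      then have "WIN G \<rho> B" using cont unfolding W_def by blast
      then show ?thesis by (rule WIN_mono) simp
    next
      case False
      have "slack \<rho> c < 0"
      proof (rule K1)
        show "wf_constr c" using cG by simp
        fix \<tau> assume e: "extends \<tau> \<rho>"
        have "\<not> sat \<tau> l" using lval_some[OF Some e] False by simp
        then show "\<not> satc \<tau> c" using side P e by blast
      qed
      then show ?thesis using cG WIN_conf by blast
    qed
  qed
qed

lemma w_mono: "W G Q B \<Longrightarrow> (\<And>\<tau>. P \<tau> \<Longrightarrow> Q \<tau>) \<Longrightarrow> B \<le> B' \<Longrightarrow> W G P B'"
  unfolding W_def by (meson WIN_mono)

lemma w_chain:
  assumes cs: "\<And>r. r < g \<Longrightarrow> cs r \<in> G \<and> wf_constr (cs r)"
    and side: "\<And>r \<tau>. r < g \<Longrightarrow> sat \<tau> (L r) \<Longrightarrow> \<not> sat \<tau> (L (Suc r)) \<Longrightarrow> \<not> satc \<tau> (cs r)"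
    and P0: "\<And>\<tau>. P \<tau> \<Longrightarrow> sat \<tau> (L 0)"
    and cont: "W G (\<lambda>\<tau>. P \<tau> \<and> sat \<tau> (L g)) B"
  shows "W G P (g + B)"
  using cs side cont
proof (induction g arbitrary: B)
  case 0
  then show ?case by (auto intro: w_mono P0)
next
  case (Suc g)
  have "W G (\<lambda>\<tau>. P \<tau> \<and> sat \<tau> (L g)) (Suc B)"
    by (rule w_step[where c = "cs g" and l = "L (Suc g)"]) (use Suc.prems in \<open>auto intro: w_mono\<close>)
  then have "W G P (g + Suc B)" using Suc.IH[of "Suc B"] Suc.prems by auto
  then show ?case by simp
qed

lemma rup_of_W: "W (insert (negc c) G) (\<lambda>_. True) B \<Longrightarrow> \<exists>p\<le>B. rup G c p"
  unfolding W_def WIN_def rup_def by (drule spec[of _ "\<lambda>_. None"]) blast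



section \<open>Semantics of pb\<close>

lemma sum_lits:
  assumes "finite S" "set (map snd ts) \<subseteq> S"
  shows "(\<Sum>l\<in>S. sum_list (map (\<lambda>(c, l'). if l' = l then c else 0) ts) * (h l :: int))
         = sum_list (map (\<lambda>(c, l). c * h l) ts)"
  using assms(2)
proof (induction ts)
  case Nil
  then show ?case by simp
next
  case (Cons a ts)
  obtain c0 l0 where a: "a = (c0, l0)" by (cases a)
  have "(\<Sum>l\<in>S. sum_list (map (\<lambda>(c, l'). if l' = l then c else 0) (a # ts)) * h l)
      = (\<Sum>l\<in>S. (if l0 = l then c0 * h l else 0)) + (\<Sum>l\<in>S. sum_list (map (\<lambda>(c, l'). if l' = l then c else 0) ts) * h l)"
    by (simp add: a sum.distrib[symmetric] distrib_right) (rule sum.cong, auto)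
  also have "\<dots> = c0 * h l0 + sum_list (map (\<lambda>(c, l). c * h l) ts)"
    using Cons assms(1) a by simp
  finally show ?case by (simp add: a)
qed

lemma val_of_lits:
  assumes fin: "finite S" and supp: "\<And>l. g l \<noteq> 0 \<Longrightarrow> l \<in> S"
  shows "val \<tau> (of_lits g D) - snd (of_lits g D) = (\<Sum>l\<in>S. g l * of_bool (sat \<tau> l)) - D"
    and "finite (vars (of_lits g D))"
proof -
  define V where "V = {v. Pos v \<in> S} \<union> {v. Neg v \<in> S}"
  have finV: "finite V" unfolding V_def
    using finite_vimageI[OF fin, of Pos] finite_vimageI[OF fin, of Neg] by (auto simp: vimage_def inj_on_def)
  have vs: "vars (of_lits g D) \<subseteq> V"
    by (auto simp: vars_def of_lits_def V_def) (metis eq_iff_diff_eq_0 supp)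
  then show "finite (vars (of_lits g D))" using finV finite_subset by blast
  have v1: "val \<tau> (of_lits g D) = (\<Sum>v\<in>V. (g (Pos v) - g (Neg v)) * of_bool (\<tau> v))"
    unfolding val_def by (rule sum.mono_neutral_cong_left[OF finV vs]) (auto simp: vars_def of_lits_def)
  have v2: "snd (of_lits g D) = D - (\<Sum>v\<in>V. g (Neg v))"
    unfolding of_lits_def using supp
    by (simp, intro sum.mono_neutral_cong_left[OF finV]) (auto simp: V_def)
  have S: "(\<Sum>l\<in>S. g l * of_bool (sat \<tau> l)) = (\<Sum>l\<in>Pos ` V \<union> Neg ` V. g l * of_bool (sat \<tau> l))"
  proof (rule sum.mono_neutral_left)
    show "finite (Pos ` V \<union> Neg ` V)" using finV by simp
    show "S \<subseteq> Pos ` V \<union> Neg ` V"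
    proof
      fix l assume "l \<in> S" then show "l \<in> Pos ` V \<union> Neg ` V" by (cases l) (auto simp: V_def)
    qed
    show "\<forall>i\<in>Pos ` V \<union> Neg ` V - S. g i * of_bool (sat \<tau> i) = 0" using supp by auto
  qed
  also have "\<dots> = (\<Sum>l\<in>Pos ` V. g l * of_bool (sat \<tau> l)) + (\<Sum>l\<in>Neg ` V. g l * of_bool (sat \<tau> l))"
    by (rule sum.union_disjoint) (auto simp: finV)
  also have "(\<Sum>l\<in>Pos ` V. g l * of_bool (sat \<tau> l)) = (\<Sum>v\<in>V. g (Pos v) * of_bool (\<tau> v))"
    by (subst sum.reindex) (auto simp: inj_on_def comp_def)
  also have "(\<Sum>l\<in>Neg ` V. g l * of_bool (sat \<tau> l)) = (\<Sum>v\<in>V. g (Neg v) * of_bool (\<not> \<tau> v))"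
    by (subst sum.reindex) (auto simp: inj_on_def comp_def)
  finally show "val \<tau> (of_lits g D) - snd (of_lits g D) = (\<Sum>l\<in>S. g l * of_bool (sat \<tau> l)) - D"
    unfolding v1 v2 by (simp add: sum.distrib[symmetric] sum_subtractf[symmetric] algebra_simps)
      (rule sum.cong; auto simp: algebra_simps)
qed

lemma pb_supp: "sum_list (map (\<lambda>(c, l'). if l' = l then c else 0) ts) \<noteq> 0 \<Longrightarrow> l \<in> snd ` set ts"
  by (induction ts) (auto split: if_splits)

lemma wf_pb[simp]: "wf_constr (pb ts A)"
  unfolding pb_def wf_constr_def by (rule val_of_lits(2)[of "set (map snd ts)"]) (auto intro: pb_supp)

lemma satc_pb: "satc \<tau> (pb ts A) \<longleftrightarrow> A \<le> sum_list (map (\<lambda>(c, l). c * of_bool (sat \<tau> l)) ts)"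
proof -
  have "val \<tau> (pb ts A) - snd (pb ts A) = (\<Sum>l\<in>set (map snd ts). sum_list (map (\<lambda>(c, l'). if l' = l then c else 0) ts) * of_bool (sat \<tau> l)) - A"
    unfolding pb_def by (rule val_of_lits(1)) (auto intro: pb_supp)
  also have "(\<Sum>l\<in>set (map snd ts). sum_list (map (\<lambda>(c, l'). if l' = l then c else 0) ts) * of_bool (sat \<tau> l))
     = sum_list (map (\<lambda>(c, l). c * of_bool (sat \<tau> l)) ts)"
    by (rule sum_lits) auto
  finally show ?thesis unfolding satc_def by linarith
qed

lemma negc_vars: "vars (negc c) = vars c"
  by (simp add: vars_def negc_def)

lemma wf_negc[simp]: "wf_constr (negc c) = wf_constr c"
  by (simp add: wf_constr_def negc_vars)

lemma satc_negc[simp]: "satc \<tau> (negc c) \<longleftrightarrow> \<not> satc \<tau> c"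
proof -
  have "val \<tau> (negc c) = - val \<tau> c"
    by (simp add: val_def negc_vars) (simp add: negc_def sum_negf)
  moreover have "snd (negc c) = 1 - snd c" by (simp add: negc_def)
  ultimately show ?thesis unfolding satc_def by linarith
qed

definition cl :: "'v lit list \<Rightarrow> 'v constr" where
  "cl ls = pb (map (\<lambda>l. (1, l)) ls) 1"

lemma sum_ob_nonneg: "(0::int) \<le> sum_list (map (\<lambda>l. of_bool (sat \<tau> l)) ls)"
  by (induction ls) auto

lemma satc_cl[simp]: "satc \<tau> (cl ls) \<longleftrightarrow> (\<exists>l\<in>set ls. sat \<tau> l)"
proof -
  have e: "sum_list (map (\<lambda>(c, l). c * of_bool (sat \<tau> l)) (map (\<lambda>l. (1::int, l)) ls)) = sum_list (map (\<lambda>l. of_bool (sat \<tau> l)) ls)"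
    by (induction ls) auto
  have "((1::int) \<le> sum_list (map (\<lambda>l. of_bool (sat \<tau> l)) ls)) = (\<exists>l\<in>set ls. sat \<tau> l)"
  proof (induction ls)
    case (Cons a ls)
    then show ?case using sum_ob_nonneg[of \<tau> ls] by auto
  qed simp
  then show ?thesis unfolding cl_def satc_pb e .
qed

lemma wf_cl[simp]: "wf_constr (cl ls)" by (simp add: cl_def)




definition "ld2 \<sigma> = pb [(2, Pos (AuxD 1)), (1, neg (Pos (X 1))), (1, \<sigma> (Pos (X 1)))] 2"
definition "ld4 \<sigma> l = pb [(4, Pos (AuxD (l+1))), (3, Neg (AuxD l)), (1, Pos (AuxA l)), (1, neg (Pos (X (l+1)))), (1, \<sigma> (Pos (X (l+1))))] 3"
definition "la1 \<sigma> = pb [(1, Neg (AuxA 1)), (1, \<sigma> (Pos (X 1))), (1, neg (Pos (X 1)))] 1"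
definition "la3 \<sigma> l = pb [(3, Neg (AuxA (l+1))), (2, Pos (AuxA l)), (1, \<sigma> (Pos (X (l+1)))), (1, neg (Pos (X (l+1))))] 3"
definition "cs1 \<sigma> i = pb [(1, Neg (AuxS 1)), (1, Pos (X (i 1))), (1, neg (\<sigma> (Pos (X (i 1)))))] 1"
definition "cs3 \<sigma> i j = pb [(3, Neg (AuxS (j+1))), (2, Pos (AuxS j)), (1, Pos (X (i (j+1)))), (1, neg (\<sigma> (Pos (X (i (j+1))))))] 3"
definition "ct2 \<sigma> i = pb [(2, Pos (AuxT 1)), (1, neg (\<sigma> (Pos (X (i 1))))), (1, Pos (X (i 1)))] 2"
definition "ct4 \<sigma> i j = pb [(3, Pos (AuxT (j+1))), (3, Neg (AuxT j)), (1, Pos (AuxS j)), (1, neg (\<sigma> (Pos (X (i (j+1)))))), (1, Pos (X (i (j+1))))] 3"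

lemma ld2_lex: "ld2 \<sigma> \<in> lexspec n (\<lambda>j. \<sigma> (Pos (X j))) (\<lambda>j. Pos (X j)) AuxA AuxD"
  unfolding lexspec_def ld2_def by blast
lemma ld4_lex: "1 \<le> l \<Longrightarrow> l \<le> n - 1 \<Longrightarrow> ld4 \<sigma> l \<in> lexspec n (\<lambda>j. \<sigma> (Pos (X j))) (\<lambda>j. Pos (X j)) AuxA AuxD"
  unfolding lexspec_def ld4_def by (intro UnI2 UN_I[of l]) auto
lemma la1_lex: "la1 \<sigma> \<in> lexspec n (\<lambda>j. \<sigma> (Pos (X j))) (\<lambda>j. Pos (X j)) AuxA AuxD"
  unfolding lexspec_def la1_def by blast
lemma la3_lex: "1 \<le> l \<Longrightarrow> l \<le> n - 2 \<Longrightarrow> la3 \<sigma> l \<in> lexspec n (\<lambda>j. \<sigma> (Pos (X j))) (\<lambda>j. Pos (X j)) AuxA AuxD"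
  unfolding lexspec_def la3_def by (intro UnI1 UnI2 UN_I[of l]) auto
lemma cs1_circ: "cs1 \<sigma> i \<in> circuit k (\<lambda>j. Pos (X (i j))) (\<lambda>j. \<sigma> (Pos (X (i j)))) AuxS AuxT"
  unfolding circuit_def cs1_def by blast
lemma cs3_circ: "1 \<le> j \<Longrightarrow> j \<le> k - 2 \<Longrightarrow> cs3 \<sigma> i j \<in> circuit k (\<lambda>j. Pos (X (i j))) (\<lambda>j. \<sigma> (Pos (X (i j)))) AuxS AuxT"
  unfolding circuit_def cs3_def by (intro UnI1 UnI2 UN_I[of j]) auto
lemma ct2_circ: "ct2 \<sigma> i \<in> circuit k (\<lambda>j. Pos (X (i j))) (\<lambda>j. \<sigma> (Pos (X (i j)))) AuxS AuxT"
  unfolding circuit_def ct2_def by blast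
lemma ct4_circ: "1 \<le> j \<Longrightarrow> j \<le> k - 1 \<Longrightarrow> ct4 \<sigma> i j \<in> circuit k (\<lambda>j. Pos (X (i j))) (\<lambda>j. \<sigma> (Pos (X (i j)))) AuxS AuxT"
  unfolding circuit_def ct4_def by (intro UnI2 UN_I[of j]) auto




lemma w_conf0:
  assumes "c \<in> G \<and> wf_constr c" "\<And>\<tau>. P \<tau> \<Longrightarrow> \<not> satc \<tau> c"
  shows "W G P 0"
  using w_conf[OF assms] .

lemma rup_fin: "\<exists>B. B \<le> N \<and> W (insert (negc c) G) (\<lambda>_. True) B \<Longrightarrow> \<exists>p \<le> N. rup G c p"
proof -
  assume "\<exists>B. B \<le> N \<and> W (insert (negc c) G) (\<lambda>_. True) B"
  then obtain B where B: "B \<le> N" "W (insert (negc c) G) (\<lambda>_. True) B" by blast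
  from rup_of_W[OF B(2)] obtain p where "p \<le> B" "rup G c p" by blast
  then show ?thesis using B(1) by (intro exI[of _ p]) auto
qed

definition "I1 i j = cl [Pos (AuxT j), Pos (AuxD (i j))]"
definition "I2 i j = cl [Pos (AuxD (i j)), Neg (AuxS j)]"
definition "I3 i j = cl [Pos (AuxT j), Neg (AuxA (i j))]"
definition "Hc i j = cl [Pos (AuxT (Suc j)), Pos (AuxD (i (Suc j))), Neg (AuxT j)]"

locale env =
  fixes n k :: nat and i :: "nat \<Rightarrow> nat" and \<sigma> :: "var lit \<Rightarrow> var lit" and F :: "var constr set"
  assumes k1: "1 \<le> k" and smono: "strict_mono_on {1..k} i" and irange: "i ` {1..k} \<subseteq> {1..n}"
    and nonsupp: "\<And>l. l \<notin> i ` {1..k} \<Longrightarrow> \<sigma> (Pos (X l)) = Pos (X l)"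
    and lexF: "lexspec n (\<lambda>j. \<sigma> (Pos (X j))) (\<lambda>j. Pos (X j)) AuxA AuxD \<subseteq> F"
    and circF: "circuit k (\<lambda>j. Pos (X (i j))) (\<lambda>j. \<sigma> (Pos (X (i j)))) AuxS AuxT \<subseteq> F"
begin

lemma ilt: "1 \<le> a \<Longrightarrow> a < b \<Longrightarrow> b \<le> k \<Longrightarrow> i a < i b"
  using smono by (auto simp: strict_mono_on_def)

lemma ile: "1 \<le> a \<Longrightarrow> a \<le> b \<Longrightarrow> b \<le> k \<Longrightarrow> i a \<le> i b"
  using ilt by (cases "a = b") (auto simp: le_less)

lemma irng: "1 \<le> a \<Longrightarrow> a \<le> k \<Longrightarrow> 1 \<le> i a \<and> i a \<le> n"
proof -
  assume "1 \<le> a" "a \<le> k"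
  then have "a \<in> {1..k}" by simp
  then have "i a \<in> i ` {1..k}" by (rule imageI)
  then have "i a \<in> {1..n}" using irange by (rule subsetD[rotated])
  then show ?thesis by simp
qed

lemma gap:
  assumes "1 \<le> j" "j < k" "i j < l" "l < i (Suc j)"
  shows "\<sigma> (Pos (X l)) = Pos (X l)"
proof (rule nonsupp, rule notI)
  assume "l \<in> i ` {1..k}"
  then obtain j' where j': "1 \<le> j'" "j' \<le> k" "l = i j'" by auto
  show False
  proof (cases "j' \<le> j")
    case True then have "i j' \<le> i j" using ile j' assms by auto
    then show False using assms j' by simp
  next
    case False then have "i (Suc j) \<le> i j'" using ile j' assms by auto
    then show False using assms j' by simp
  qed
qed

lemma pre:
  assumes "l < i 1" shows "\<sigma> (Pos (X l)) = Pos (X l)"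
proof (rule nonsupp, rule notI)
  assume "l \<in> i ` {1..k}"
  then obtain j' where j': "1 \<le> j'" "j' \<le> k" "l = i j'" by auto
  then have "i 1 \<le> i j'" using ile by auto
  then show False using assms j' by simp
qed

lemma suf:
  assumes "i k < l" shows "\<sigma> (Pos (X l)) = Pos (X l)"
proof (rule nonsupp, rule notI)
  assume "l \<in> i ` {1..k}"
  then obtain j' where j': "1 \<le> j'" "j' \<le> k" "l = i j'" by auto
  then have "i j' \<le> i k" using ile by auto
  then show False using assms j' by simp
qed

lemma mem_ld2: "F \<subseteq> G \<Longrightarrow> ld2 \<sigma> \<in> G \<and> wf_constr (ld2 \<sigma>)"
  using ld2_lex[of \<sigma> n] lexF by (auto simp: ld2_def)
lemma mem_ld4: "F \<subseteq> G \<Longrightarrow> 1 \<le> l \<Longrightarrow> l \<le> n - 1 \<Longrightarrow> ld4 \<sigma> l \<in> G \<and> wf_constr (ld4 \<sigma> l)"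
  using ld4_lex[of l n \<sigma>] lexF by (auto simp: ld4_def)
lemma mem_la1: "F \<subseteq> G \<Longrightarrow> la1 \<sigma> \<in> G \<and> wf_constr (la1 \<sigma>)"
  using la1_lex[of \<sigma> n] lexF by (auto simp: la1_def)
lemma mem_la3: "F \<subseteq> G \<Longrightarrow> 1 \<le> l \<Longrightarrow> l \<le> n - 2 \<Longrightarrow> la3 \<sigma> l \<in> G \<and> wf_constr (la3 \<sigma> l)"
  using la3_lex[of l n \<sigma>] lexF by (auto simp: la3_def)
lemma mem_cs1: "F \<subseteq> G \<Longrightarrow> cs1 \<sigma> i \<in> G \<and> wf_constr (cs1 \<sigma> i)"
  using cs1_circ[of \<sigma> i k] circF by (auto simp: cs1_def)
lemma mem_cs3: "F \<subseteq> G \<Longrightarrow> 1 \<le> j \<Longrightarrow> j \<le> k - 2 \<Longrightarrow> cs3 \<sigma> i j \<in> G \<and> wf_constr (cs3 \<sigma> i j)"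
  using cs3_circ[of j k \<sigma> i] circF by (auto simp: cs3_def)
lemma mem_ct2: "F \<subseteq> G \<Longrightarrow> ct2 \<sigma> i \<in> G \<and> wf_constr (ct2 \<sigma> i)"
  using ct2_circ[of \<sigma> i k] circF by (auto simp: ct2_def)
lemma mem_ct4: "F \<subseteq> G \<Longrightarrow> 1 \<le> j \<Longrightarrow> j \<le> k - 1 \<Longrightarrow> ct4 \<sigma> i j \<in> G \<and> wf_constr (ct4 \<sigma> i j)"
  using ct4_circ[of j k \<sigma> i] circF by (auto simp: ct4_def)

lemma dchain:
  assumes FG: "F \<subseteq> G" and a1: "1 \<le> a" and ab: "a \<le> b" and bn: "b \<le> n"
    and ns: "\<And>l. a < l \<Longrightarrow> l \<le> b \<Longrightarrow> \<sigma> (Pos (X l)) = Pos (X l)"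
    and P0: "\<And>\<tau>. P \<tau> \<Longrightarrow> \<tau> (AuxD a)"
    and cont: "W G (\<lambda>\<tau>. P \<tau> \<and> \<tau> (AuxD b)) B"
  shows "W G P ((b - a) + B)"
proof (rule w_chain[where cs="\<lambda>r. ld4 \<sigma> (a + r)" and L="\<lambda>r. Pos (AuxD (a + r))"])
  fix r assume r: "r < b - a"
  show "ld4 \<sigma> (a + r) \<in> G \<and> wf_constr (ld4 \<sigma> (a + r))" using mem_ld4[OF FG] r a1 ab bn by auto
next
  fix r \<tau> assume r: "r < b - a" and h1: "sat \<tau> (Pos (AuxD (a + r)))" and h2: "\<not> sat \<tau> (Pos (AuxD (a + Suc r)))"
  have e: "\<sigma> (Pos (X (Suc (a + r)))) = Pos (X (Suc (a + r)))" using ns r by auto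
  show "\<not> satc \<tau> (ld4 \<sigma> (a + r))" using h1 h2 unfolding ld4_def satc_pb by (auto simp: e of_bool_def)
next
  fix \<tau> assume "P \<tau>" then show "sat \<tau> (Pos (AuxD (a + 0)))" using P0 by simp
next
  show "W G (\<lambda>\<tau>. P \<tau> \<and> sat \<tau> (Pos (AuxD (a + (b - a))))) B" using cont ab by simp
qed

lemma achain:
  assumes FG: "F \<subseteq> G" and a1: "1 \<le> a" and ab: "a \<le> b" and bn: "b \<le> n - 1"
    and P0: "\<And>\<tau>. P \<tau> \<Longrightarrow> \<tau> (AuxA b)"
    and cont: "W G (\<lambda>\<tau>. P \<tau> \<and> \<tau> (AuxA a)) B"
  shows "W G P ((b - a) + B)"
proof (rule w_chain[where cs="\<lambda>r. la3 \<sigma> (b - Suc r)" and L="\<lambda>r. Pos (AuxA (b - r))"])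
  fix r assume r: "r < b - a"
  show "la3 \<sigma> (b - Suc r) \<in> G \<and> wf_constr (la3 \<sigma> (b - Suc r))" using mem_la3[OF FG] r a1 ab bn by auto
next
  fix r \<tau> assume r: "r < b - a" and h1: "sat \<tau> (Pos (AuxA (b - r)))" and h2: "\<not> sat \<tau> (Pos (AuxA (b - Suc r)))"
  have e: "b - Suc r + 1 = b - r" using r ab by arith
  show "\<not> satc \<tau> (la3 \<sigma> (b - Suc r))" using h1 h2 unfolding la3_def satc_pb e by (auto simp: of_bool_def)
next
  fix \<tau> assume "P \<tau>" then show "sat \<tau> (Pos (AuxA (b - 0)))" using P0 by simp
next
  show "W G (\<lambda>\<tau>. P \<tau> \<and> sat \<tau> (Pos (AuxA (b - (b - a))))) B" using cont ab by simp
qed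

lemma dnchain:
  assumes FG: "F \<subseteq> G" and a1: "1 \<le> a" and ab: "a \<le> b" and bn: "b \<le> n"
    and ns: "\<And>l. a < l \<Longrightarrow> l \<le> b \<Longrightarrow> \<sigma> (Pos (X l)) = Pos (X l)"
    and P0: "\<And>\<tau>. P \<tau> \<Longrightarrow> \<not> \<tau> (AuxD b)"
    and cont: "W G (\<lambda>\<tau>. P \<tau> \<and> \<not> \<tau> (AuxD a)) B"
  shows "W G P ((b - a) + B)"
proof (rule w_chain[where cs="\<lambda>r. ld4 \<sigma> (b - Suc r)" and L="\<lambda>r. Neg (AuxD (b - r))"])
  fix r assume r: "r < b - a"
  show "ld4 \<sigma> (b - Suc r) \<in> G \<and> wf_constr (ld4 \<sigma> (b - Suc r))" using mem_ld4[OF FG] r a1 ab bn by auto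
next
  fix r \<tau> assume r: "r < b - a" and h1: "sat \<tau> (Neg (AuxD (b - r)))" and h2: "\<not> sat \<tau> (Neg (AuxD (b - Suc r)))"
  have e: "b - Suc r + 1 = b - r" using r ab by arith
  have e2: "\<sigma> (Pos (X (b - r))) = Pos (X (b - r))" using ns r by auto
  show "\<not> satc \<tau> (ld4 \<sigma> (b - Suc r))" using h1 h2 unfolding ld4_def satc_pb e by (auto simp: e2 of_bool_def)
next
  fix \<tau> assume "P \<tau>" then show "sat \<tau> (Neg (AuxD (b - 0)))" using P0 by simp
next
  show "W G (\<lambda>\<tau>. P \<tau> \<and> sat \<tau> (Neg (AuxD (b - (b - a))))) B" using cont ab by simp
qed

lemma rI1_base:
  assumes FG: "F \<subseteq> G"
  shows "\<exists>p \<le> 2 * i 1 + 10. rup G (I1 i 1) p"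
proof -
  let ?G = "insert (negc (I1 i 1)) G"
  have FG': "F \<subseteq> ?G" using FG by auto
  have n1: "negc (I1 i 1) \<in> ?G \<and> wf_constr (negc (I1 i 1))" by (simp add: I1_def)
  have r1: "1 \<le> i 1" "i 1 \<le> n" using irng k1 by auto
  have "\<exists>B. B \<le> 2 * i 1 + 10 \<and> W ?G (\<lambda>_. True) B"
  proof (cases "i 1 = 1")
    case True
    show ?thesis
      apply (rule exI, rule conjI[rotated])
      apply (rule w_step[OF n1, where l="Neg (AuxT 1)"])
       apply (simp add: I1_def)
      apply (rule w_step[OF n1, where l="Neg (AuxD (i 1))"])
       apply (simp add: I1_def)
      apply (rule w_step[OF mem_ct2[OF FG'], where l="neg (\<sigma> (Pos (X (i 1))))"])
       apply (auto simp: ct2_def satc_pb of_bool_def)[1]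
      apply (rule w_step[OF mem_ct2[OF FG'], where l="Pos (X (i 1))"])
       apply (auto simp: ct2_def satc_pb of_bool_def)[1]
      apply (rule w_conf0[OF mem_ld2[OF FG']])
       apply (auto simp: ld2_def satc_pb True[simplified] of_bool_def)[1]
      apply simp
      done
  next
    case False
    then have i2: "2 \<le> i 1" using r1 by auto
    have p1: "\<sigma> (Pos (X 1)) = Pos (X 1)" "\<sigma> (Pos (X (Suc 0))) = Pos (X (Suc 0))" using pre i2 by auto
    have m4: "ld4 \<sigma> (i 1 - 1) \<in> ?G \<and> wf_constr (ld4 \<sigma> (i 1 - 1))" using mem_ld4[OF FG'] i2 r1 by auto
    have e: "Suc (i 1 - 1) = i 1" "Suc (i (Suc 0) - Suc 0) = i (Suc 0)" using i2 by simp_all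
    have ns: "\<And>l. 1 < l \<Longrightarrow> l \<le> i 1 - 1 \<Longrightarrow> \<sigma> (Pos (X l)) = Pos (X l)" using pre by auto
    have a: "1 \<le> (1::nat)" "1 \<le> i 1 - 1" "i 1 - 1 \<le> n" using i2 r1 by auto
    show ?thesis
      apply (rule exI, rule conjI[rotated])
      apply (rule w_step[OF n1, where l="Neg (AuxT 1)"])
       apply (simp add: I1_def)
      apply (rule w_step[OF n1, where l="Neg (AuxD (i 1))"])
       apply (simp add: I1_def)
      apply (rule w_step[OF mem_ct2[OF FG'], where l="neg (\<sigma> (Pos (X (i 1))))"])
       apply (auto simp: ct2_def satc_pb of_bool_def)[1]
      apply (rule w_step[OF mem_ct2[OF FG'], where l="Pos (X (i 1))"])
       apply (auto simp: ct2_def satc_pb of_bool_def)[1]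
      apply (rule w_step[OF mem_ld2[OF FG'], where l="Pos (AuxD 1)"])
       apply (auto simp: ld2_def satc_pb of_bool_def p1)[1]
      apply (rule dchain[where a=1 and b="i 1 - 1", OF FG' a])
        apply (simp add: ns)
       apply simp
      apply (rule w_conf0[OF m4])
       apply (auto simp: ld4_def satc_pb of_bool_def e)[1]
      apply (simp add: i2)
      done
  qed
  then show ?thesis by (rule rup_fin)
qed


lemma rI2_base:
  assumes FG: "F \<subseteq> G"
  shows "\<exists>p \<le> 2 * i 1 + 10. rup G (I2 i 1) p"
proof -
  let ?G = "insert (negc (I2 i 1)) G"
  have FG': "F \<subseteq> ?G" using FG by auto
  have n1: "negc (I2 i 1) \<in> ?G \<and> wf_constr (negc (I2 i 1))" by (simp add: I2_def)
  have r1: "1 \<le> i 1" "i 1 \<le> n" using irng k1 by auto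
  have "\<exists>B. B \<le> 2 * i 1 + 10 \<and> W ?G (\<lambda>_. True) B"
  proof (cases "i 1 = 1")
    case True
    show ?thesis
      apply (rule exI, rule conjI[rotated])
      apply (rule w_step[OF n1, where l="Neg (AuxD (i 1))"])
       apply (simp add: I2_def)
      apply (rule w_step[OF n1, where l="Pos (AuxS 1)"])
       apply (simp add: I2_def)
      apply (rule w_step[OF mem_ld2[OF FG'], where l="Neg (X 1)"])
       apply (auto simp: ld2_def satc_pb of_bool_def True[simplified])[1]
      apply (rule w_step[OF mem_ld2[OF FG'], where l="\<sigma> (Pos (X 1))"])
       apply (auto simp: ld2_def satc_pb of_bool_def True[simplified])[1]
      apply (rule w_conf0[OF mem_cs1[OF FG']])
       apply (auto simp: cs1_def satc_pb True[simplified] of_bool_def)[1]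
      apply simp
      done
  next
    case False
    then have i2: "2 \<le> i 1" using r1 by auto
    have p1: "\<sigma> (Pos (X 1)) = Pos (X 1)" "\<sigma> (Pos (X (Suc 0))) = Pos (X (Suc 0))" using pre i2 by auto
    have m4: "ld4 \<sigma> (i 1 - 1) \<in> ?G \<and> wf_constr (ld4 \<sigma> (i 1 - 1))" using mem_ld4[OF FG'] i2 r1 by auto
    have e: "Suc (i 1 - 1) = i 1" "Suc (i (Suc 0) - Suc 0) = i (Suc 0)" using i2 by simp_all
    have ns: "\<And>l. 1 < l \<Longrightarrow> l \<le> i 1 - 1 \<Longrightarrow> \<sigma> (Pos (X l)) = Pos (X l)" using pre by auto
    have a: "1 \<le> (1::nat)" "1 \<le> i 1 - 1" "i 1 - 1 \<le> n" using i2 r1 by auto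
    show ?thesis
      apply (rule exI, rule conjI[rotated])
      apply (rule w_step[OF n1, where l="Neg (AuxD (i 1))"])
       apply (simp add: I2_def)
      apply (rule w_step[OF n1, where l="Pos (AuxS 1)"])
       apply (simp add: I2_def)
      apply (rule w_step[OF mem_ld2[OF FG'], where l="Pos (AuxD 1)"])
       apply (auto simp: ld2_def satc_pb of_bool_def p1)[1]
      apply (rule dchain[where a=1 and b="i 1 - 1", OF FG' a])
        apply (simp add: ns)
       apply simp
      apply (rule w_step[OF m4, where l="Neg (X (i 1))"])
       apply (auto simp: ld4_def satc_pb of_bool_def e)[1]
      apply (rule w_step[OF m4, where l="\<sigma> (Pos (X (i 1)))"])
       apply (auto simp: ld4_def satc_pb of_bool_def e)[1]
      apply (rule w_conf0[OF mem_cs1[OF FG']])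
       apply (auto simp: cs1_def satc_pb of_bool_def)[1]
      apply (simp add: i2)
      done
  qed
  then show ?thesis by (rule rup_fin)
qed

lemma rI3_base:
  assumes FG: "F \<subseteq> G" and k2: "1 < k"
  shows "\<exists>p \<le> 2 * i 1 + 10. rup G (I3 i 1) p"
proof -
  let ?G = "insert (negc (I3 i 1)) G"
  have FG': "F \<subseteq> ?G" using FG by auto
  have n1: "negc (I3 i 1) \<in> ?G \<and> wf_constr (negc (I3 i 1))" by (simp add: I3_def)
  have r1: "1 \<le> i 1" "i 1 \<le> n" using irng k1 by auto
  have "i 1 < i 2" using ilt k2 by auto
  moreover have "i 2 \<le> n" using irng k2 by auto
  ultimately have r2: "i 1 \<le> n - 1" by simp
  have "\<exists>B. B \<le> 2 * i 1 + 10 \<and> W ?G (\<lambda>_. True) B"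
  proof (cases "i 1 = 1")
    case True
    show ?thesis
      apply (rule exI, rule conjI[rotated])
      apply (rule w_step[OF n1, where l="Neg (AuxT 1)"])
       apply (simp add: I3_def)
      apply (rule w_step[OF n1, where l="Pos (AuxA (i 1))"])
       apply (simp add: I3_def)
      apply (rule w_step[OF mem_ct2[OF FG'], where l="neg (\<sigma> (Pos (X (i 1))))"])
       apply (auto simp: ct2_def satc_pb of_bool_def)[1]
      apply (rule w_step[OF mem_ct2[OF FG'], where l="Pos (X (i 1))"])
       apply (auto simp: ct2_def satc_pb of_bool_def)[1]
      apply (rule w_conf0[OF mem_la1[OF FG']])
       apply (auto simp: la1_def satc_pb True[simplified] of_bool_def)[1]
      apply simp
      done
  next
    case False
    then have i2: "2 \<le> i 1" using r1 by auto
    have m3: "la3 \<sigma> (i 1 - 1) \<in> ?G \<and> wf_constr (la3 \<sigma> (i 1 - 1))" using mem_la3[OF FG'] i2 r2 by auto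
    have e: "Suc (i 1 - 1) = i 1" "Suc (i (Suc 0) - Suc 0) = i (Suc 0)" using i2 by simp_all
    show ?thesis
      apply (rule exI, rule conjI[rotated])
      apply (rule w_step[OF n1, where l="Neg (AuxT 1)"])
       apply (simp add: I3_def)
      apply (rule w_step[OF n1, where l="Pos (AuxA (i 1))"])
       apply (simp add: I3_def)
      apply (rule w_step[OF mem_ct2[OF FG'], where l="neg (\<sigma> (Pos (X (i 1))))"])
       apply (auto simp: ct2_def satc_pb of_bool_def)[1]
      apply (rule w_step[OF mem_ct2[OF FG'], where l="Pos (X (i 1))"])
       apply (auto simp: ct2_def satc_pb of_bool_def)[1]
      apply (rule w_conf0[OF m3])
       apply (auto simp: la3_def satc_pb e of_bool_def)[1]
      apply simp
      done
  qed
  then show ?thesis by (rule rup_fin)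
qed


lemma stepfacts:
  assumes j1: "1 \<le> j" and jk: "Suc j \<le> k"
  shows "1 \<le> i j" "i j < i (Suc j)" "i (Suc j) \<le> n"
    "Suc (i (Suc j) - 1) = i (Suc j)" "Suc (i (Suc j) - Suc 0) = i (Suc j)"
    "\<And>l. i j < l \<Longrightarrow> l \<le> i (Suc j) - 1 \<Longrightarrow> \<sigma> (Pos (X l)) = Pos (X l)"
    "i j \<le> i (Suc j) - 1" "i (Suc j) - 1 \<le> n" "1 \<le> i (Suc j) - 1" "i (Suc j) - 1 \<le> n - 1"
proof -
  show r1: "1 \<le> i j" using irng j1 jk by auto
  show r2: "i j < i (Suc j)" using ilt j1 jk by auto
  show r3: "i (Suc j) \<le> n" using irng j1 jk by auto
  show "Suc (i (Suc j) - 1) = i (Suc j)" "Suc (i (Suc j) - Suc 0) = i (Suc j)"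
    "i j \<le> i (Suc j) - 1" "i (Suc j) - 1 \<le> n" "1 \<le> i (Suc j) - 1" "i (Suc j) - 1 \<le> n - 1"
    using r1 r2 r3 by auto
  fix l assume "i j < l" "l \<le> i (Suc j) - 1"
  then show "\<sigma> (Pos (X l)) = Pos (X l)" using gap[OF j1] jk by auto
qed

lemma rH:
  assumes FG: "F \<subseteq> G" and j1: "1 \<le> j" and jk: "Suc j \<le> k" and h2: "I2 i j \<in> G"
  shows "\<exists>p \<le> 2 * (i (Suc j) - i j) + 10. rup G (Hc i j) p"
proof -
  let ?G = "insert (negc (Hc i j)) G"
  have FG': "F \<subseteq> ?G" using FG by auto
  have n1: "negc (Hc i j) \<in> ?G \<and> wf_constr (negc (Hc i j))" by (simp add: Hc_def)
  note sf = stepfacts[OF j1 jk]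
  have m4: "ld4 \<sigma> (i (Suc j) - 1) \<in> ?G \<and> wf_constr (ld4 \<sigma> (i (Suc j) - 1))" using mem_ld4[OF FG'] sf by auto
  have c4: "ct4 \<sigma> i j \<in> ?G \<and> wf_constr (ct4 \<sigma> i j)" using mem_ct4[OF FG'] j1 jk by auto
  have mI2: "I2 i j \<in> ?G \<and> wf_constr (I2 i j)" using h2 by (auto simp: I2_def)
  have "\<exists>B. B \<le> 2 * (i (Suc j) - i j) + 10 \<and> W ?G (\<lambda>_. True) B"
    apply (rule exI, rule conjI[rotated])
    apply (rule w_step[OF n1, where l="Neg (AuxT (Suc j))"])
     apply (simp add: Hc_def)
    apply (rule w_step[OF n1, where l="Neg (AuxD (i (Suc j)))"])
     apply (simp add: Hc_def)
    apply (rule w_step[OF n1, where l="Pos (AuxT j)"])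
     apply (simp add: Hc_def)
    apply (rule w_step[OF c4, where l="Pos (AuxS j)"])
     apply (auto simp: ct4_def satc_pb of_bool_def)[1]
    apply (rule w_step[OF c4, where l="Pos (X (i (Suc j)))"])
     apply (auto simp: ct4_def satc_pb of_bool_def)[1]
    apply (rule w_step[OF mI2, where l="Pos (AuxD (i j))"])
     apply (simp add: I2_def)
    apply (rule dchain[where a="i j" and b="i (Suc j) - 1", OF FG'])
          apply (simp_all only: sf)
     apply simp
    apply (rule w_conf0[OF m4])
     apply (auto simp: ld4_def satc_pb of_bool_def sf)[1]
    using sf apply simp
    done
  then show ?thesis by (rule rup_fin)
qed

lemma rI1s:
  assumes FG: "F \<subseteq> G" and j1: "1 \<le> j" and jk: "Suc j \<le> k"
    and hh: "Hc i j \<in> G" and h1: "I1 i j \<in> G" and h3: "I3 i j \<in> G"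
  shows "\<exists>p \<le> 2 * (i (Suc j) - i j) + 10. rup G (I1 i (Suc j)) p"
proof -
  let ?G = "insert (negc (I1 i (Suc j))) G"
  have FG': "F \<subseteq> ?G" using FG by auto
  have n1: "negc (I1 i (Suc j)) \<in> ?G \<and> wf_constr (negc (I1 i (Suc j)))" by (simp add: I1_def)
  note sf = stepfacts[OF j1 jk]
  have m4: "ld4 \<sigma> (i (Suc j) - 1) \<in> ?G \<and> wf_constr (ld4 \<sigma> (i (Suc j) - 1))" using mem_ld4[OF FG'] sf by auto
  have mH: "Hc i j \<in> ?G \<and> wf_constr (Hc i j)" using hh by (auto simp: Hc_def)
  have mI1: "I1 i j \<in> ?G \<and> wf_constr (I1 i j)" using h1 by (auto simp: I1_def)
  have mI3: "I3 i j \<in> ?G \<and> wf_constr (I3 i j)" using h3 by (auto simp: I3_def)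
  have "\<exists>B. B \<le> 2 * (i (Suc j) - i j) + 10 \<and> W ?G (\<lambda>_. True) B"
    apply (rule exI, rule conjI[rotated])
    apply (rule w_step[OF n1, where l="Neg (AuxT (Suc j))"])
     apply (simp add: I1_def)
    apply (rule w_step[OF n1, where l="Neg (AuxD (i (Suc j)))"])
     apply (simp add: I1_def)
    apply (rule w_step[OF mH, where l="Neg (AuxT j)"])
     apply (simp add: Hc_def)
    apply (rule w_step[OF mI1, where l="Pos (AuxD (i j))"])
     apply (simp add: I1_def)
    apply (rule dchain[where a="i j" and b="i (Suc j) - 1", OF FG'])
          apply (simp_all only: sf)
     apply simp
    apply (rule w_step[OF m4, where l="Pos (AuxA (i (Suc j) - 1))"])
     apply (auto simp: ld4_def satc_pb of_bool_def sf)[1]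
    apply (rule achain[where a="i j" and b="i (Suc j) - 1", OF FG'])
        apply (simp_all only: sf)
     apply simp
    apply (rule w_conf0[OF mI3])
     apply (simp add: I3_def)
    using sf apply simp
    done
  then show ?thesis by (rule rup_fin)
qed

lemma rI2s:
  assumes FG: "F \<subseteq> G" and j1: "1 \<le> j" and jk: "Suc j < k" and h2: "I2 i j \<in> G"
  shows "\<exists>p \<le> 2 * (i (Suc j) - i j) + 10. rup G (I2 i (Suc j)) p"
proof -
  let ?G = "insert (negc (I2 i (Suc j))) G"
  have FG': "F \<subseteq> ?G" using FG by auto
  have n1: "negc (I2 i (Suc j)) \<in> ?G \<and> wf_constr (negc (I2 i (Suc j)))" by (simp add: I2_def)
  note sf = stepfacts[OF j1 less_imp_le[OF jk]]
  have m4: "ld4 \<sigma> (i (Suc j) - 1) \<in> ?G \<and> wf_constr (ld4 \<sigma> (i (Suc j) - 1))" using mem_ld4[OF FG'] sf by auto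
  have c3: "cs3 \<sigma> i j \<in> ?G \<and> wf_constr (cs3 \<sigma> i j)" using mem_cs3[OF FG'] j1 jk by auto
  have mI2: "I2 i j \<in> ?G \<and> wf_constr (I2 i j)" using h2 by (auto simp: I2_def)
  have "\<exists>B. B \<le> 2 * (i (Suc j) - i j) + 10 \<and> W ?G (\<lambda>_. True) B"
    apply (rule exI, rule conjI[rotated])
    apply (rule w_step[OF n1, where l="Neg (AuxD (i (Suc j)))"])
     apply (simp add: I2_def)
    apply (rule w_step[OF n1, where l="Pos (AuxS (Suc j))"])
     apply (simp add: I2_def)
    apply (rule w_step[OF c3, where l="Pos (AuxS j)"])
     apply (auto simp: cs3_def satc_pb of_bool_def)[1]
    apply (rule w_step[OF mI2, where l="Pos (AuxD (i j))"])
     apply (simp add: I2_def)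
    apply (rule dchain[where a="i j" and b="i (Suc j) - 1", OF FG'])
          apply (simp_all only: sf)
     apply simp
    apply (rule w_step[OF m4, where l="Neg (X (i (Suc j)))"])
     apply (auto simp: ld4_def satc_pb of_bool_def sf)[1]
    apply (rule w_step[OF c3, where l="neg (\<sigma> (Pos (X (i (Suc j)))))"])
     apply (auto simp: cs3_def satc_pb of_bool_def)[1]
    apply (rule w_conf0[OF m4])
     apply (auto simp: ld4_def satc_pb of_bool_def sf)[1]
    using sf apply simp
    done
  then show ?thesis by (rule rup_fin)
qed

lemma rI3s:
  assumes FG: "F \<subseteq> G" and j1: "1 \<le> j" and jk: "Suc j < k" and h3: "I3 i j \<in> G"
  shows "\<exists>p \<le> 2 * (i (Suc j) - i j) + 10. rup G (I3 i (Suc j)) p"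
proof -
  let ?G = "insert (negc (I3 i (Suc j))) G"
  have FG': "F \<subseteq> ?G" using FG by auto
  have n1: "negc (I3 i (Suc j)) \<in> ?G \<and> wf_constr (negc (I3 i (Suc j)))" by (simp add: I3_def)
  note sf = stepfacts[OF j1 less_imp_le[OF jk]]
  have "i (Suc j) < i (Suc (Suc j))" using ilt j1 jk by auto
  moreover have "i (Suc (Suc j)) \<le> n" using irng jk by auto
  ultimately have r2: "i (Suc j) - 1 \<le> n - 2" using sf by auto
  have m3: "la3 \<sigma> (i (Suc j) - 1) \<in> ?G \<and> wf_constr (la3 \<sigma> (i (Suc j) - 1))" using mem_la3[OF FG'] sf r2 by auto
  have c4: "ct4 \<sigma> i j \<in> ?G \<and> wf_constr (ct4 \<sigma> i j)" using mem_ct4[OF FG'] j1 jk by auto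
  have mI3: "I3 i j \<in> ?G \<and> wf_constr (I3 i j)" using h3 by (auto simp: I3_def)
  have "\<exists>B. B \<le> 2 * (i (Suc j) - i j) + 10 \<and> W ?G (\<lambda>_. True) B"
    apply (rule exI, rule conjI[rotated])
    apply (rule w_step[OF n1, where l="Neg (AuxT (Suc j))"])
     apply (simp add: I3_def)
    apply (rule w_step[OF n1, where l="Pos (AuxA (i (Suc j)))"])
     apply (simp add: I3_def)
    apply (rule w_step[OF m3, where l="Pos (AuxA (i (Suc j) - 1))"])
     apply (auto simp: la3_def satc_pb of_bool_def sf)[1]
    apply (rule achain[where a="i j" and b="i (Suc j) - 1", OF FG'])
        apply (simp_all only: sf)
     apply simp
    apply (rule w_step[OF mI3, where l="Pos (AuxT j)"])
     apply (simp add: I3_def)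
    apply (rule w_step[OF c4, where l="Pos (X (i (Suc j)))"])
     apply (auto simp: ct4_def satc_pb of_bool_def)[1]
    apply (rule w_step[OF c4, where l="neg (\<sigma> (Pos (X (i (Suc j)))))"])
     apply (auto simp: ct4_def satc_pb of_bool_def)[1]
    apply (rule w_conf0[OF m3])
     apply (auto simp: la3_def satc_pb of_bool_def sf)[1]
    using sf apply simp
    done
  then show ?thesis by (rule rup_fin)
qed

lemma rFin:
  assumes FG: "F \<subseteq> G" and uT: "pb [(1, Neg (AuxT k))] 1 \<in> G" and uD: "pb [(1, Neg (AuxD n))] 1 \<in> G"
    and h1: "I1 i k \<in> G"
  shows "\<exists>p \<le> n + 10. rup G falsum p"
proof -
  let ?G = "insert (negc falsum) G"
  have FG': "F \<subseteq> ?G" using FG by auto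
  have mT: "pb [(1, Neg (AuxT k))] 1 \<in> ?G \<and> wf_constr (pb [(1, Neg (AuxT k))] 1)" using uT by simp
  have mD: "pb [(1, Neg (AuxD n))] 1 \<in> ?G \<and> wf_constr (pb [(1, Neg (AuxD n))] 1)" using uD by simp
  have mI1: "I1 i k \<in> ?G \<and> wf_constr (I1 i k)" using h1 by (auto simp: I1_def)
  have r: "1 \<le> i k" "i k \<le> n" using irng k1 by auto
  have ns: "\<And>l. i k < l \<Longrightarrow> l \<le> n \<Longrightarrow> \<sigma> (Pos (X l)) = Pos (X l)" using suf by auto
  have "\<exists>B. B \<le> n + 10 \<and> W ?G (\<lambda>_. True) B"
    apply (rule exI, rule conjI[rotated])
    apply (rule w_step[OF mT, where l="Neg (AuxT k)"])
     apply (simp add: satc_pb)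
    apply (rule w_step[OF mD, where l="Neg (AuxD n)"])
     apply (simp add: satc_pb)
    apply (rule dnchain[where a="i k" and b="n", OF FG' r(1) r(2) order_refl])
      apply (simp add: ns)
     apply simp
    apply (rule w_conf0[OF mI1])
     apply (simp add: I1_def)
    apply simp
    done
  then show ?thesis by (rule rup_fin)
qed


lemma i_ge: "1 \<le> j \<Longrightarrow> j \<le> k \<Longrightarrow> j \<le> i j"
proof (induction j)
  case 0 then show ?case by simp
next
  case (Suc j)
  show ?case
  proof (cases "j = 0")
    case True then show ?thesis using irng k1 by auto
  next
    case False
    then have "j \<le> i j" using Suc by auto
    moreover have "i j < i (Suc j)" using ilt False Suc.prems by auto
    ultimately show ?thesis by simp
  qed
qed

lemma inv:
  "1 \<le> j \<Longrightarrow> j \<le> k \<Longrightarrow> \<exists>st. valid_from F st \<and> sum_list (map step_cost st) \<le> 4 * j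
     \<and> sum_list (map step_props st) \<le> 100 * j + 20 * i j
     \<and> I1 i j \<in> F \<union> set (map step_constr st)
     \<and> (j < k \<longrightarrow> I2 i j \<in> F \<union> set (map step_constr st) \<and> I3 i j \<in> F \<union> set (map step_constr st))"
proof (induction j)
  case 0 then show ?case by simp
next
  case (Suc j)
  show ?case
  proof (cases "j = 0")
    case True
    obtain p1 where p1: "p1 \<le> 2 * i 1 + 10" "rup F (I1 i 1) p1" using rI1_base[of F] by auto
    obtain p2 where p2: "p2 \<le> 2 * i 1 + 10" "rup (insert (I1 i 1) F) (I2 i 1) p2"
      using rI2_base[of "insert (I1 i 1) F"] by auto
    show ?thesis
    proof (cases "1 < k")
      case True
      obtain p3 where p3: "p3 \<le> 2 * i 1 + 10" "rup (insert (I2 i 1) (insert (I1 i 1) F)) (I3 i 1) p3"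
        using rI3_base[of "insert (I2 i 1) (insert (I1 i 1) F)"] True by auto
      show ?thesis
        by (rule exI[of _ "[RUPStep (I1 i 1) p1, RUPStep (I2 i 1) p2, RUPStep (I3 i 1) p3]"])
          (use p1 p2 p3 \<open>j = 0\<close> in auto)
    next
      case False
      show ?thesis
        by (rule exI[of _ "[RUPStep (I1 i 1) p1]"]) (use p1 False \<open>j = 0\<close> in auto)
    qed
  next
    case False
    then have j1: "1 \<le> j" and jk: "Suc j \<le> k" using Suc.prems by auto
    obtain st where st: "valid_from F st" "sum_list (map step_cost st) \<le> 4 * j"
      "sum_list (map step_props st) \<le> 100 * j + 20 * i j"
      "I1 i j \<in> F \<union> set (map step_constr st)"
      "I2 i j \<in> F \<union> set (map step_constr st)" "I3 i j \<in> F \<union> set (map step_constr st)"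
      using Suc.IH j1 jk by auto
    define S where "S = F \<union> set (map step_constr st)"
    have FS: "F \<subseteq> S" by (simp add: S_def)
    note sf = stepfacts[OF j1 jk]
    obtain pH where pH: "pH \<le> 2 * (i (Suc j) - i j) + 10" "rup S (Hc i j) pH"
      using rH[OF FS j1 jk] st(5) by (auto simp: S_def)
    obtain p1 where p1: "p1 \<le> 2 * (i (Suc j) - i j) + 10" "rup (insert (Hc i j) S) (I1 i (Suc j)) p1"
      using rI1s[of "insert (Hc i j) S", OF _ j1 jk] FS st(4,6) by (auto simp: S_def)
    have vapp: "valid_from F (st @ st2) \<longleftrightarrow> valid_from S st2" for st2
      using st(1) unfolding S_def
    proof (induction st arbitrary: F)
      case Nil then show ?case by simp
    next
      case (Cons a st)
      then show ?case by (cases a) auto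
    qed
    show ?thesis
    proof (cases "Suc j < k")
      case True
      let ?G2 = "insert (I1 i (Suc j)) (insert (Hc i j) S)"
      obtain p2 where p2: "p2 \<le> 2 * (i (Suc j) - i j) + 10" "rup ?G2 (I2 i (Suc j)) p2"
        using rI2s[of ?G2, OF _ j1 True] FS st(5) by (auto simp: S_def)
      obtain p3 where p3: "p3 \<le> 2 * (i (Suc j) - i j) + 10" "rup (insert (I2 i (Suc j)) ?G2) (I3 i (Suc j)) p3"
        using rI3s[of "insert (I2 i (Suc j)) ?G2", OF _ j1 True] FS st(6) by (auto simp: S_def)
      let ?st = "st @ [RUPStep (Hc i j) pH, RUPStep (I1 i (Suc j)) p1, RUPStep (I2 i (Suc j)) p2, RUPStep (I3 i (Suc j)) p3]"
      have "valid_from F ?st" using vapp pH p1 p2 p3 by simp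
      moreover have "sum_list (map step_cost ?st) \<le> 4 * Suc j" using st(2) by simp
      moreover have "sum_list (map step_props ?st) \<le> 100 * Suc j + 20 * i (Suc j)"
        using st(3) pH(1) p1(1) p2(1) p3(1) sf(2) by simp
      moreover have "I1 i (Suc j) \<in> F \<union> set (map step_constr ?st)" by simp
      moreover have "I2 i (Suc j) \<in> F \<union> set (map step_constr ?st)" by simp
      moreover have "I3 i (Suc j) \<in> F \<union> set (map step_constr ?st)" by simp
      ultimately show ?thesis by blast
    next
      case False
      let ?st = "st @ [RUPStep (Hc i j) pH, RUPStep (I1 i (Suc j)) p1]"
      have "valid_from F ?st" using vapp pH p1 by simp
      moreover have "sum_list (map step_cost ?st) \<le> 4 * Suc j" using st(2) by simp
      moreover have "sum_list (map step_props ?st) \<le> 100 * Suc j + 20 * i (Suc j)"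
        using st(3) pH(1) p1(1) sf(2) by simp
      moreover have "I1 i (Suc j) \<in> F \<union> set (map step_constr ?st)" by simp
      ultimately show ?thesis using False by blast
    qed
  qed
qed

lemma final:
  assumes uT: "pb [(1, Neg (AuxT k))] 1 \<in> F" and uD: "pb [(1, Neg (AuxD n))] 1 \<in> F"
  shows "\<exists>st. refutes F st \<and> sum_list (map step_cost st) \<le> 5 * k \<and> sum_list (map step_props st) \<le> 200 * n"
proof -
  obtain st where st: "valid_from F st" "sum_list (map step_cost st) \<le> 4 * k"
      "sum_list (map step_props st) \<le> 100 * k + 20 * i k"
      "I1 i k \<in> F \<union> set (map step_constr st)"
    using inv[OF k1 order_refl] by auto
  define S where "S = F \<union> set (map step_constr st)"
  have FS: "F \<subseteq> S" by (simp add: S_def)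
  obtain p where p: "p \<le> n + 10" "rup S falsum p"
    using rFin[OF FS] uT uD st(4) by (auto simp: S_def)
  have vapp: "valid_from F (st @ st2) \<longleftrightarrow> valid_from S st2" for st2
    using st(1) unfolding S_def
  proof (induction st arbitrary: F)
    case Nil then show ?case by simp
  next
    case (Cons a st)
    then show ?case by (cases a) auto
  qed
  have kn: "k \<le> i k" "i k \<le> n" "1 \<le> n" using i_ge[OF k1 order_refl] irng[OF k1 order_refl] k1 by auto
  let ?st = "st @ [RUPStep falsum p]"
  have "refutes F ?st" using vapp p by (simp add: refutes_def)
  moreover have "sum_list (map step_cost ?st) \<le> 5 * k" using st(2) k1 by simp
  moreover have "sum_list (map step_props ?st) \<le> 200 * n" using st(3) p(1) kn by simp
  ultimately show ?thesis by blast
qed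

end

theorem lemma15:
  "\<exists>K1 K2 :: nat. \<forall>(n::nat) (k::nat) (i::nat \<Rightarrow> nat) (\<sigma>::var lit \<Rightarrow> var lit)
       (C::var constr set) (D::var constr set).
     n \<ge> 1 \<and> k \<ge> 1 \<and> strict_mono_on {1..k} i \<and> i ` {1..k} \<subseteq> {1..n}
     \<and> finite C \<and> (\<forall>c\<in>C. wf_constr c) \<and> finite D \<and> (\<forall>c\<in>D. wf_constr c)
     \<and> is_symmetry \<sigma> C \<and> supp \<sigma> = X ` i ` {1..k}
     \<and> (\<forall>c\<in>C. vars c \<subseteq> range X \<union> range Other)
     \<and> (\<forall>c\<in>D. vars c \<inter> (range AuxA \<union> range AuxD) = {})
     \<and> circuit k (\<lambda>j. Pos (X (i j))) (\<lambda>j. \<sigma> (Pos (X (i j)))) AuxS AuxT \<subseteq> D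
     \<longrightarrow> (\<exists>st :: var pstep list.
            refutes (C \<union> D \<union> {pb [(1, Neg (AuxT k))] 1}
                     \<union> lexspec n (\<lambda>j. \<sigma> (Pos (X j))) (\<lambda>j. Pos (X j)) AuxA AuxD
                     \<union> {pb [(1, Neg (AuxD n))] 1}) st
            \<and> sum_list (map step_cost st) \<le> K1 * k
            \<and> sum_list (map step_props st) \<le> K2 * n)"
proof (rule exI[of _ "5::nat"], rule exI[of _ "200::nat"], intro allI impI)
  fix n k :: nat and i :: "nat \<Rightarrow> nat" and \<sigma> :: "var lit \<Rightarrow> var lit" and C D :: "var constr set"
  assume h: "n \<ge> 1 \<and> k \<ge> 1 \<and> strict_mono_on {1..k} i \<and> i ` {1..k} \<subseteq> {1..n}
     \<and> finite C \<and> (\<forall>c\<in>C. wf_constr c) \<and> finite D \<and> (\<forall>c\<in>D. wf_constr c)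
     \<and> is_symmetry \<sigma> C \<and> supp \<sigma> = X ` i ` {1..k}
     \<and> (\<forall>c\<in>C. vars c \<subseteq> range X \<union> range Other)
     \<and> (\<forall>c\<in>D. vars c \<inter> (range AuxA \<union> range AuxD) = {})
     \<and> circuit k (\<lambda>j. Pos (X (i j))) (\<lambda>j. \<sigma> (Pos (X (i j)))) AuxS AuxT \<subseteq> D"
  define F0 where "F0 = C \<union> D \<union> {pb [(1, Neg (AuxT k))] 1}
                     \<union> lexspec n (\<lambda>j. \<sigma> (Pos (X j))) (\<lambda>j. Pos (X j)) AuxA AuxD
                     \<union> {pb [(1, Neg (AuxD n))] 1}"
  have ns: "\<And>l. l \<notin> i ` {1..k} \<Longrightarrow> \<sigma> (Pos (X l)) = Pos (X l)"
  proof (rule ccontr)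
    fix l assume l: "l \<notin> i ` {1..k}" and ne: "\<sigma> (Pos (X l)) \<noteq> Pos (X l)"
    then have "X l \<in> supp \<sigma>" by (simp add: supp_def)
    then have "X l \<in> X ` i ` {1..k}" using h by simp
    then show False using l by auto
  qed
  interpret env n k i \<sigma> F0
    by unfold_locales (use h ns in \<open>auto simp: F0_def\<close>)
  have "\<exists>st. refutes F0 st \<and> sum_list (map step_cost st) \<le> 5 * k \<and> sum_list (map step_props st) \<le> 200 * n"
    by (rule final) (auto simp: F0_def)
  then show "\<exists>st. refutes (C \<union> D \<union> {pb [(1, Neg (AuxT k))] 1}
                     \<union> lexspec n (\<lambda>j. \<sigma> (Pos (X j))) (\<lambda>j. Pos (X j)) AuxA AuxD
                     \<union> {pb [(1, Neg (AuxD n))] 1}) st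
            \<and> sum_list (map step_cost st) \<le> 5 * k
            \<and> sum_list (map step_props st) \<le> 200 * n" unfolding F0_def .
qed


end
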